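(* Let $3\le n\le k$ be integers and $g:\mathbb{N}\to\mathbb{R}$. For $j=1,\dots,n-1$ and $\mathbf{r}=(r_1,\dots,r_{n-1})$ define $$f_j(\mathbf{r})=\sum_{l=1}^{j}\mathds{1}_{\{r_l=1\}}\frac{(|\mathbf{r}|-1)!}{r_1!\cdots r_{n-1}!}\Big(\frac1k\Big)^{|\mathbf{r}|}g(r_{n-1}),$$ and for $i=1,\dots,n-1$ let $N_i=r_i+\dots+r_{n-1}$. Then for $j=1,\dots,n-2$, $$\sum_{\mathbf{r}\in E_j}f_j(\mathbf{r})=\sum_{l=1}^{j}\binom{j}{l}\frac{l}{k^l}\sum_{\substack{r_{l+1}\ge2,\dots,r_j\ge2\\ r_{j+1}\ge0,\dots,r_{n-1}\ge0}}\frac{(l-1+N_{l+1})!}{r_{l+1}!\cdots r_{n-1}!}\Big(\frac1k\Big)^{N_{l+1}}g(r_{n-1})$$ for any $g$ such that the right-hand side is finite. Moreover, this identity also holds for $j=n-1$ when $g(i)=1$ for all $i\in\mathbb{N}$, provided the right-hand side is finite.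
   Context: $\mathbb{N}=\{0,1,2,\dots\}$, $|\mathbf{r}|=r_1+\dots+r_{n-1}$, $0!=1$. For $j=1,\dots,n-1$, $E_j$ is the set of $\mathbf{r}\in\mathbb{N}^{n-1}$ such that $r_i\ge1$ for $1\le i\le j$, $r_l\ge0$ for $j+1\le l\le n-1$, and $\prod_{i=1}^{j}(r_i-1)=0$ (i.e. at least one of $r_1,\dots,r_j$ equals $1$). In the inner sum on the right, the constraint set $\{r_{l+1}\ge2,\dots,r_j\ge2\}$ is empty when $l=j$; for $j=n-1$ the constraints $r_{j+1},\dots,r_{n-1}\ge0$ are vacuous and $N_{n}=0$. *)

theory Defs
  imports "HOL-Analysis.Analysis"
begin

text \<open>Vectors r = (r_1,...,r_{n-1}) in N^{n-1} are represented as functions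
  nat => nat that vanish outside the index range {1..n-1}.\<close>

definition absr :: "nat \<Rightarrow> (nat \<Rightarrow> nat) \<Rightarrow> nat" where
  "absr n r = (\<Sum>i=1..n-1. r i)"

definition Eset :: "nat \<Rightarrow> nat \<Rightarrow> (nat \<Rightarrow> nat) set" where
  "Eset n j = {r. (\<forall>i. (i < 1 \<or> n - 1 < i) \<longrightarrow> r i = 0)
                \<and> (\<forall>i\<in>{1..j}. 1 \<le> r i)
                \<and> (\<Prod>i=1..j. (r i - 1)) = 0}"

definition fj :: "nat \<Rightarrow> nat \<Rightarrow> (nat \<Rightarrow> real) \<Rightarrow> nat \<Rightarrow> (nat \<Rightarrow> nat) \<Rightarrow> real" where
  "fj n k g j r = (\<Sum>l=1..j. (if r l = 1 then 1 else 0)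
      * (fact (absr n r - 1) / (\<Prod>i=1..n-1. fact (r i)))
      * (1 / real k) ^ absr n r * g (r (n - 1)))"

definition Ntail :: "nat \<Rightarrow> nat \<Rightarrow> (nat \<Rightarrow> nat) \<Rightarrow> nat" where
  "Ntail n i r = (\<Sum>m=i..n-1. r m)"

definition Inner :: "nat \<Rightarrow> nat \<Rightarrow> nat \<Rightarrow> (nat \<Rightarrow> nat) set" where
  "Inner n j l = {r. (\<forall>i. (i < l + 1 \<or> n - 1 < i) \<longrightarrow> r i = 0)
                    \<and> (\<forall>i\<in>{l+1..j}. 2 \<le> r i)}"

definition inner_term :: "nat \<Rightarrow> nat \<Rightarrow> (nat \<Rightarrow> real) \<Rightarrow> nat \<Rightarrow> (nat \<Rightarrow> nat) \<Rightarrow> real" where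
  "inner_term n k g l r = fact (l - 1 + Ntail n (l + 1) r) / (\<Prod>i=l+1..n-1. fact (r i))
      * (1 / real k) ^ Ntail n (l + 1) r * g (r (n - 1))"

definition RHS :: "nat \<Rightarrow> nat \<Rightarrow> (nat \<Rightarrow> real) \<Rightarrow> nat \<Rightarrow> real" where
  "RHS n k g j = (\<Sum>l=1..j. real (j choose l) * real l / real k ^ l
      * infsum (inner_term n k g l) (Inner n j l))"

end

theory Submission
  imports Defs
begin

lemma has_sum_finite_UN:
  fixes f :: "'a \<Rightarrow> real"
  assumes "finite I" "\<And>i. i\<in>I \<Longrightarrow> (f has_sum c i) (P i)"
    "\<And>i i'. i\<in>I \<Longrightarrow> i'\<in>I \<Longrightarrow> i\<noteq>i' \<Longrightarrow> P i \<inter> P i' = {}"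
  shows "(f has_sum (\<Sum>i\<in>I. c i)) (\<Union>i\<in>I. P i)"
  using assms
proof (induction I rule: finite_induct)
  case empty
  then show ?case by simp
next
  case (insert x F)
  have "(f has_sum (c x + (\<Sum>i\<in>F. c i))) (P x \<union> (\<Union>i\<in>F. P i))"
    apply (rule has_sum_Un_disjoint)
    using insert by auto
  then show ?case using insert by simp
qed

lemma fj_eq: "fj n k g j r = (\<Sum>l'=1..j. if r l' = 1 then 1 else 0) *
   (fact (absr n r - 1) / (\<Prod>i=1..n-1. fact (r i)) * (1 / real k) ^ absr n r * g (r (n - 1)))"
  unfolding fj_def sum_distrib_right by (simp add: mult.assoc)

lemma split_sum:
  fixes h :: "nat \<Rightarrow> 'b::comm_monoid_add"
  assumes S: "S \<subseteq> {1..j}" and l: "card S = l" and jn: "j \<le> n - 1"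
    and tau: "bij_betw \<tau> ({1..j} - S) {l+1..j}"
  shows "(\<Sum>i=1..n-1. h (if i \<in> S then 1 else if i \<in> {1..j} then s (\<tau> i) else s i))
     = (\<Sum>i\<in>S. h 1) + (\<Sum>m=l+1..n-1. h (s m))"
proof -
  have fS: "finite S" using S finite_subset by blast
  have lj: "l \<le> j" using S l by (metis card_atLeastAtMost card_mono finite_atLeastAtMost diff_Suc_1)
  have e1: "{1..n-1} = S \<union> (({1..j} - S) \<union> {j+1..n-1})" using S jn by auto
  have e2: "{l+1..n-1} = {l+1..j} \<union> {j+1..n-1}" using lj jn by auto
  let ?F = "\<lambda>i. h (if i \<in> S then 1 else if i \<in> {1..j} then s (\<tau> i) else s i)"
  have "(\<Sum>i=1..n-1. ?F i) = sum ?F S + (sum ?F ({1..j} - S) + sum ?F {j+1..n-1})"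
    unfolding e1 using fS S
    by (subst sum.union_disjoint, auto, subst sum.union_disjoint, auto)
  also have "sum ?F S = (\<Sum>i\<in>S. h 1)" by simp
  also have "sum ?F ({1..j} - S) = (\<Sum>i\<in>{1..j} - S. h (s (\<tau> i)))" by (rule sum.cong) auto
  also have "\<dots> = (\<Sum>m=l+1..j. h (s m))" using sum.reindex_bij_betw[OF tau, of "\<lambda>m. h (s m)"] by simp
  also have "sum ?F {j+1..n-1} = (\<Sum>m=j+1..n-1. h (s m))" using S by (intro sum.cong) auto
  also have "(\<Sum>m=l+1..j. h (s m)) + (\<Sum>m=j+1..n-1. h (s m)) = (\<Sum>m=l+1..n-1. h (s m))"
    unfolding e2 by (subst sum.union_disjoint) auto
  finally show ?thesis .
qed

lemma split_prod:
  fixes h :: "nat \<Rightarrow> 'b::comm_monoid_mult"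
  assumes S: "S \<subseteq> {1..j}" and l: "card S = l" and jn: "j \<le> n - 1"
    and tau: "bij_betw \<tau> ({1..j} - S) {l+1..j}"
  shows "(\<Prod>i=1..n-1. h (if i \<in> S then 1 else if i \<in> {1..j} then s (\<tau> i) else s i))
     = (\<Prod>i\<in>S. h 1) * (\<Prod>m=l+1..n-1. h (s m))"
proof -
  have fS: "finite S" using S finite_subset by blast
  have lj: "l \<le> j" using S l by (metis card_atLeastAtMost card_mono finite_atLeastAtMost diff_Suc_1)
  have e1: "{1..n-1} = S \<union> (({1..j} - S) \<union> {j+1..n-1})" using S jn by auto
  have e2: "{l+1..n-1} = {l+1..j} \<union> {j+1..n-1}" using lj jn by auto
  let ?F = "\<lambda>i. h (if i \<in> S then 1 else if i \<in> {1..j} then s (\<tau> i) else s i)"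
  have "(\<Prod>i=1..n-1. ?F i) = prod ?F S * (prod ?F ({1..j} - S) * prod ?F {j+1..n-1})"
    unfolding e1 using fS S
    by (subst prod.union_disjoint, auto, subst prod.union_disjoint, auto)
  also have "prod ?F S = (\<Prod>i\<in>S. h 1)" by simp
  also have "prod ?F ({1..j} - S) = (\<Prod>i\<in>{1..j} - S. h (s (\<tau> i)))" by (rule prod.cong) auto
  also have "\<dots> = (\<Prod>m=l+1..j. h (s m))" using prod.reindex_bij_betw[OF tau, of "\<lambda>m. h (s m)"] by simp
  also have "prod ?F {j+1..n-1} = (\<Prod>m=j+1..n-1. h (s m))" using S by (intro prod.cong) auto
  also have "(\<Prod>m=l+1..j. h (s m)) * (\<Prod>m=j+1..n-1. h (s m)) = (\<Prod>m=l+1..n-1. h (s m))"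
    unfolding e2 by (subst prod.union_disjoint) auto
  finally show ?thesis .
qed

lemma piece:
  fixes n k j :: nat and g :: "nat \<Rightarrow> real"
  assumes n3: "3 \<le> n" and nk: "n \<le> k" and jn: "j \<le> n - 1"
    and gc: "j \<le> n - 2 \<or> (\<forall>i. g i = 1)"
    and S: "S \<subseteq> {1..j}" "S \<noteq> {}" and l: "card S = l"
    and summ: "inner_term n k g l summable_on Inner n j l"
  shows "(fj n k g j has_sum (real l / real k ^ l * infsum (inner_term n k g l) (Inner n j l)))
           {r \<in> Eset n j. {i\<in>{1..j}. r i = 1} = S}"
proof -
  have fS: "finite S" using S finite_subset by blast
  have lj: "l \<le> j" using S l by (metis card_atLeastAtMost card_mono finite_atLeastAtMost diff_Suc_1)
  have l1: "1 \<le> l" using S(2) fS l by (metis One_nat_def Suc_leI card_gt_0_iff)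
  have "card ({1..j} - S) = card {l+1..j}" using S fS l by (simp add: card_Diff_subset)
  then obtain \<tau> where tau: "bij_betw \<tau> ({1..j} - S) {l+1..j}"
    using finite_same_card_bij by (metis finite_Diff finite_atLeastAtMost)
  define \<Phi> where "\<Phi> s = (\<lambda>i. if i \<in> S then 1 else if i \<in> {1..j} then s (\<tau> i) else s i)"
    for s :: "nat \<Rightarrow> nat"
  define \<sigma> where "\<sigma> = the_inv_into ({1..j} - S) \<tau>"
  define \<Psi> where "\<Psi> r = (\<lambda>m. if m \<in> {l+1..j} then r (\<sigma> m) else if j < m \<and> m \<le> n-1 then r m else 0)"
    for r :: "nat \<Rightarrow> nat"
  have sig1: "\<sigma> m \<in> {1..j} - S" "\<tau> (\<sigma> m) = m" if "m \<in> {l+1..j}" for m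
  proof -
    have inj: "inj_on \<tau> ({1..j} - S)" and im: "m \<in> \<tau> ` ({1..j} - S)"
      using that tau unfolding bij_betw_def by auto
    show "\<sigma> m \<in> {1..j} - S" unfolding \<sigma>_def by (rule the_inv_into_into[OF inj im subset_refl])
    show "\<tau> (\<sigma> m) = m" unfolding \<sigma>_def by (rule f_the_inv_into_f[OF inj im])
  qed
  have sig2: "\<sigma> (\<tau> i) = i" "\<tau> i \<in> {l+1..j}" if "i \<in> {1..j} - S" for i
    using that tau unfolding \<sigma>_def bij_betw_def
    by (auto intro: the_inv_into_f_f)
  define c where "c = real l / real k ^ l"
  have A: "\<Psi> (\<Phi> s) = s \<and> \<Phi> s \<in> {r \<in> Eset n j. {i\<in>{1..j}. r i = 1} = S} \<and> fj n k g j (\<Phi> s) = c * inner_term n k g l s"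
    if s: "s \<in> Inner n j l" for s
  proof (intro conjI)
    show "\<Psi> (\<Phi> s) = s"
    proof
      fix m
      have sv: "\<And>i. i < l + 1 \<or> n - 1 < i \<Longrightarrow> s i = 0" using s unfolding Inner_def by auto
      show "\<Psi> (\<Phi> s) m = s m"
      proof (cases "m \<in> {l+1..j}")
        case True
        then show ?thesis using sig1[OF True] unfolding \<Psi>_def \<Phi>_def by auto
      next
        case False
        have "m \<notin> S" if "j < m" using that S(1) by auto
        then show ?thesis using False sv lj unfolding \<Psi>_def \<Phi>_def by auto
      qed
    qed
    have s2: "\<And>i. i \<in> {l+1..j} \<Longrightarrow> 2 \<le> s i" using s unfolding Inner_def by blast
    have sv: "\<And>i. i < l + 1 \<or> n - 1 < i \<Longrightarrow> s i = 0" using s unfolding Inner_def by blast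
    have pS: "\<Phi> s i = 1" if "i \<in> S" for i using that unfolding \<Phi>_def by simp
    have pM: "2 \<le> \<Phi> s i" if "i \<in> {1..j} - S" for i
    proof -
      have "\<Phi> s i = s (\<tau> i)" using that unfolding \<Phi>_def by simp
      then show ?thesis using s2[OF sig2(2)[OF that]] by simp
    qed
    have pO: "\<Phi> s i = s i" if "i \<notin> {1..j}" for i using that S(1) unfolding \<Phi>_def by auto
    have ones: "{i\<in>{1..j}. \<Phi> s i = 1} = S"
    proof (rule set_eqI)
      fix i show "i \<in> {i\<in>{1..j}. \<Phi> s i = 1} \<longleftrightarrow> i \<in> S"
        using pS pM[of i] S(1) by (cases "i \<in> S") auto
    qed
    show "\<Phi> s \<in> {r \<in> Eset n j. {i\<in>{1..j}. r i = 1} = S}"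
    proof -
      have "\<forall>i. (i < 1 \<or> n - 1 < i) \<longrightarrow> \<Phi> s i = 0"
      proof (intro allI impI)
        fix i assume i: "i < 1 \<or> n - 1 < i"
        then have "i \<notin> {1..j}" using jn by auto
        then show "\<Phi> s i = 0" using pO sv i by auto
      qed
      moreover have "\<forall>i\<in>{1..j}. 1 \<le> \<Phi> s i"
      proof
        fix i assume "i \<in> {1..j}" then show "1 \<le> \<Phi> s i"
          using pS pM[of i] by (cases "i \<in> S") auto
      qed
      moreover have "(\<Prod>i=1..j. (\<Phi> s i - 1)) = 0"
      proof -
        obtain i where i: "i \<in> S" using S by blast
        then have "i \<in> {1..j}" using S(1) by blast
        then show ?thesis using pS[OF i] by (intro prod_zero) (auto intro!: bexI[of _ i])
      qed
      ultimately show ?thesis using ones unfolding Eset_def by auto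
    qed
    have cnt: "(\<Sum>l'=1..j. if \<Phi> s l' = 1 then 1 else 0) = (real l)"
    proof -
      have "(\<Sum>l'=1..j. if \<Phi> s l' = 1 then 1 else (0::real)) = (\<Sum>l'\<in>{i\<in>{1..j}. \<Phi> s i = 1}. 1)"
        by (subst sum.inter_filter) auto
      then show ?thesis using ones l by simp
    qed
    have ab: "absr n (\<Phi> s) = l + Ntail n (l+1) s"
      unfolding absr_def Ntail_def \<Phi>_def using split_sum[OF S(1) l jn tau, of "\<lambda>x. x" s] fS l by simp
    have pr: "(\<Prod>i=1..n-1. fact (\<Phi> s i)) = (\<Prod>i=l+1..n-1. fact (s i) :: real)"
      unfolding \<Phi>_def using split_prod[OF S(1) l jn tau, of "\<lambda>x. fact x :: real" s] by simp
    have gg: "g (\<Phi> s (n-1)) = g (s (n-1))"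
      using gc S n3 unfolding \<Phi>_def by auto
    have e: "absr n (\<Phi> s) - 1 = l - 1 + Ntail n (l+1) s" using ab l1 by simp
    define N where "N = Ntail n (l+1) s"
    define P where "P = (\<Prod>i=l+1..n-1. fact (s i) :: real)"
    have "fj n k g j (\<Phi> s) = real l * (fact (l - 1 + N) / P * (1 / real k) ^ (l + N) * g (s (n-1)))"
      unfolding fj_eq cnt e pr gg unfolding ab N_def P_def by simp
    also have "(1 / real k) ^ (l + N) = 1 / real k ^ l * (1 / real k) ^ N"
      by (simp add: power_add power_one_over)
    also have "real l * (fact (l - 1 + N) / P * (1 / real k ^ l * (1 / real k) ^ N) * g (s (n-1)))
       = real l / real k ^ l * (fact (l - 1 + N) / P * (1 / real k) ^ N * g (s (n-1)))"
      by (simp add: divide_simps)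
    finally show "fj n k g j (\<Phi> s) = c * inner_term n k g l s"
      unfolding inner_term_def c_def N_def P_def .
  qed
  have B: "\<Phi> (\<Psi> r) = r \<and> \<Psi> r \<in> Inner n j l"
    if r: "r \<in> {r \<in> Eset n j. {i\<in>{1..j}. r i = 1} = S}" for r
  proof -
    have rE: "r \<in> Eset n j" and rS: "{i\<in>{1..j}. r i = 1} = S" using r by auto
    have rC: "(\<forall>i. (i < 1 \<or> n - 1 < i) \<longrightarrow> r i = 0) \<and> (\<forall>i\<in>{1..j}. 1 \<le> r i) \<and> (\<Prod>i=1..j. (r i - 1)) = 0"
      using rE unfolding Eset_def mem_Collect_eq .
    have rv': "\<forall>i. (i < 1 \<or> n - 1 < i) \<longrightarrow> r i = 0" using conjunct1[OF rC] .
    have rg': "\<forall>i\<in>{1..j}. 1 \<le> r i" using conjunct1[OF conjunct2[OF rC]] .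
    have rv: "r i = 0" if "i < 1 \<or> n - 1 < i" for i using rv'[rule_format, OF that] .
    have r1: "r i = 1" if "i \<in> S" for i
    proof -
      have "i \<in> {i\<in>{1..j}. r i = 1}" using that rS by simp
      then show ?thesis by simp
    qed
    have rne: "r i \<noteq> 1" if "i \<in> {1..j} - S" for i
    proof
      assume "r i = 1"
      then have "i \<in> {i\<in>{1..j}. r i = 1}" using that by simp
      then have "i \<in> S" unfolding rS .
      then show False using that by simp
    qed
    have rge: "1 \<le> r i" if "i \<in> {1..j} - S" for i using rg' that by simp
    have "\<Phi> (\<Psi> r) = r"
    proof
      fix i
      show "\<Phi> (\<Psi> r) i = r i"
      proof (cases "i \<in> S")
        case True then show ?thesis using r1 unfolding \<Phi>_def by simp
      next
        case nS: False
        show ?thesis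
        proof (cases "i \<in> {1..j}")
          case True
          then have iD: "i \<in> {1..j} - S" using nS by blast
          have "\<Phi> (\<Psi> r) i = \<Psi> r (\<tau> i)" using nS True unfolding \<Phi>_def by simp
          also have "\<dots> = r (\<sigma> (\<tau> i))" using sig2(2)[OF iD] unfolding \<Psi>_def by simp
          finally show ?thesis using sig2(1)[OF iD] by simp
        next
          case False
          then have "\<Phi> (\<Psi> r) i = \<Psi> r i" using nS unfolding \<Phi>_def by auto
          also have "\<dots> = r i"
          proof (cases "j < i \<and> i \<le> n - 1")
            case True then show ?thesis unfolding \<Psi>_def by simp
          next
            case F2: False
            have io: "i < 1 \<or> n - 1 < i" using False F2 by auto
            have "i \<notin> {l+1..j}" using False lj by auto
            then have "\<Psi> r i = 0" using F2 unfolding \<Psi>_def by auto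
            then show ?thesis using rv[OF io] by simp
          qed
          finally show ?thesis .
        qed
      qed
    qed
    moreover have "\<Psi> r \<in> Inner n j l"
      unfolding Inner_def
    proof (intro CollectI conjI allI impI ballI)
      fix i assume "i < l + 1 \<or> n - 1 < i"
      then show "\<Psi> r i = 0" using lj jn unfolding \<Psi>_def by auto
    next
      fix i assume i: "i \<in> {l+1..j}"
      then have "\<sigma> i \<in> {1..j} - S" using sig1 by blast
      then have "1 \<le> r (\<sigma> i)" "r (\<sigma> i) \<noteq> 1" using rge rne by auto
      then show "2 \<le> \<Psi> r i" using i unfolding \<Psi>_def by auto
    qed
    ultimately show ?thesis by blast
  qed
  have key: "((\<lambda>s. c * inner_term n k g l s) has_sum (c * infsum (inner_term n k g l) (Inner n j l))) (Inner n j l)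
     = (fj n k g j has_sum (c * infsum (inner_term n k g l) (Inner n j l))) {r \<in> Eset n j. {i\<in>{1..j}. r i = 1} = S}"
    by (rule has_sum_reindex_bij_witness[where i=\<Psi> and j=\<Phi>]) (use A B in auto)
  have "((\<lambda>s. c * inner_term n k g l s) has_sum (c * infsum (inner_term n k g l) (Inner n j l))) (Inner n j l)"
    by (rule has_sum_cmult_right) (use summ in simp)
  with key show ?thesis unfolding c_def by simp
qed


theorem lemma7p2:
  fixes n k j :: nat and g :: "nat \<Rightarrow> real"
  assumes "3 \<le> n" and "n \<le> k"
    and "1 \<le> j" and "j \<le> n - 1"
    and "j \<le> n - 2 \<or> (\<forall>i. g i = 1)"
    and "\<forall>l\<in>{1..j}. inner_term n k g l summable_on Inner n j l"
  shows "(fj n k g j has_sum RHS n k g j) (Eset n j)"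
proof -
  define SS where "SS = {S. S \<subseteq> {1..j} \<and> S \<noteq> {}}"
  define P where "P S = {r \<in> Eset n j. {i\<in>{1..j}. r i = 1} = S}" for S
  define c where "c l = real l / real k ^ l * infsum (inner_term n k g l) (Inner n j l)" for l
  have fin: "finite SS" unfolding SS_def by (rule finite_subset[of _ "Pow {1..j}"]) auto
  have cardS: "card S \<in> {1..j}" if "S \<in> SS" for S
  proof -
    have "S \<subseteq> {1..j}" "S \<noteq> {}" using that unfolding SS_def by auto
    moreover have "finite S" using \<open>S \<subseteq> {1..j}\<close> finite_subset by blast
    ultimately show ?thesis using card_mono[of "{1..j}" S]
      by (auto simp: Suc_le_eq card_gt_0_iff)
  qed
  have pieces: "(fj n k g j has_sum c (card S)) (P S)" if "S \<in> SS" for S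
  proof -
    have S: "S \<subseteq> {1..j}" "S \<noteq> {}" using that unfolding SS_def by auto
    have "inner_term n k g (card S) summable_on Inner n j (card S)"
      using assms(6) cardS[OF that] by blast
    then show ?thesis unfolding c_def P_def
      using piece[OF assms(1,2,4,5) S refl] by blast
  qed
  have disj: "P S \<inter> P S' = {}" if "S \<noteq> S'" for S S'
    using that unfolding P_def by auto
  have U: "Eset n j = (\<Union>S\<in>SS. P S)"
  proof
    show "(\<Union>S\<in>SS. P S) \<subseteq> Eset n j" unfolding P_def by auto
  next
    show "Eset n j \<subseteq> (\<Union>S\<in>SS. P S)"
    proof
      fix r assume rE: "r \<in> Eset n j"
      have rC: "(\<forall>i. (i < 1 \<or> n - 1 < i) \<longrightarrow> r i = 0) \<and> (\<forall>i\<in>{1..j}. 1 \<le> r i) \<and> (\<Prod>i=1..j. (r i - 1)) = 0"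
        using rE unfolding Eset_def mem_Collect_eq .
      then have "(\<Prod>i=1..j. (r i - 1)) = 0" by blast
      then obtain i where i: "i \<in> {1..j}" "r i - 1 = 0" by (auto simp: prod_zero_iff)
      moreover have "1 \<le> r i" using rC i by blast
      ultimately have "r i = 1" by simp
      then have "{i\<in>{1..j}. r i = 1} \<in> SS" using i unfolding SS_def by auto
      moreover have "r \<in> P {i\<in>{1..j}. r i = 1}" using rE unfolding P_def by simp
      ultimately show "r \<in> (\<Union>S\<in>SS. P S)" by blast
    qed
  qed
  have hs: "(fj n k g j has_sum (\<Sum>S\<in>SS. c (card S))) (Eset n j)"
    unfolding U by (rule has_sum_finite_UN[OF fin pieces disj])
  have "(\<Sum>S\<in>SS. c (card S)) = (\<Sum>l\<in>{1..j}. \<Sum>S\<in>{S\<in>SS. card S = l}. c (card S))"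
    by (rule sum.group[symmetric]) (use fin cardS in auto)
  also have "\<dots> = (\<Sum>l\<in>{1..j}. real (j choose l) * c l)"
  proof (rule sum.cong[OF refl])
    fix l assume l: "l \<in> {1..j}"
    have "{S\<in>SS. card S = l} = {B. B \<subseteq> {1..j} \<and> card B = l}"
      using l unfolding SS_def by auto
    then have "card {S\<in>SS. card S = l} = j choose l" using n_subsets[of "{1..j}" l] by simp
    moreover have "(\<Sum>S\<in>{S\<in>SS. card S = l}. c (card S)) = (\<Sum>S\<in>{S\<in>SS. card S = l}. c l)"
      by (rule sum.cong) auto
    ultimately show "(\<Sum>S\<in>{S\<in>SS. card S = l}. c (card S)) = real (j choose l) * c l" by simp
  qed
  also have "\<dots> = RHS n k g j" unfolding RHS_def c_def by (rule sum.cong) auto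
  finally show ?thesis using hs by simp
qed

end
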